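(* Let $\mathbf Y$ be a process with paths in $\bar C^-[0,1]=\{f\in C[0,1]:f\le0\}$, let $\mathbf V$ be a standard generalized Pareto process with $D$-norm $\|\cdot\|_D$, and let $\boldsymbol\eta$ be a standard max-stable process with $P(\boldsymbol\eta\le f)=\exp(-\|f\|_D)$, $f\in\bar E^-[0,1]$. (i) If $\mathbf Y$ is in the spectral $\delta$-neighborhood of $\mathbf V$ for some $\delta\in(0,1]$, then \[ \sup_{f\in\bar E^-[0,1]}\Big|P\Big(\mathbf Y\le \frac fn\Big)^n-P(\boldsymbol\eta\le f)\Big|=O(n^{-\delta}). \] (ii) Suppose that for every $f\in\bar E_1^-[0,1]$ the function $H_f(c)=P(\mathbf Y\le c|f|)$ is differentiable in $c\in(-\varepsilon,0)$ for some $\varepsilon>0$, with derivative $h_f(c)$, and satisfies the von Mises condition \[ \frac{-c\,h_f(c)}{1-H_f(c)}=:1+r_f(c)\to 1\quad (c\uparrow 0),\qquad f\in\bar E_1^-[0,1], \] with $\sup_{f\in\bar E_1^-[0,1]}\big|\int_c^0 \frac{r_f(t)}{t}\,dt\big|\to 0$ as $c\uparrow 0$. If $\sup_{f\in\bar E^-[0,1]}|P(\mathbf Y\le f/n)^n-P(\boldsymbol\eta\le f)|=O(n^{-\delta})$ for some $\delta\in(0,1]$, then $\mathbf Y$ is in the spectral $\delta$-neighborhood of $\mathbf V$.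
   Context: $E[0,1]$: bounded functions on $[0,1]$ with finitely many discontinuities; $\bar E^-[0,1]=\{f\in E[0,1]:f\le0\}$; $\bar E_1^-[0,1]=\{f\in\bar E^-[0,1]:\|f\|_\infty=1\}$; inequalities between processes and functions are pointwise for all $t\in[0,1]$. A $D$-norm is $\|f\|_D=E(\sup_{t\in[0,1]}|f(t)|Z_t)$, $f\in E[0,1]$, for a generator process $\mathbf Z$ (continuous nonnegative paths, $\max_tZ_t=m\in[1,\infty)$ a.s., $EZ_t=1$ for all $t$). A standard max-stable process is a max-stable process with paths in $\bar C^-[0,1]$ and standard negative exponential margins. A process $\mathbf V$ with paths in $\bar C^-[0,1]$ is a standard generalized Pareto process with $D$-norm $\|\cdot\|_D$ if there is $c_0>0$ with $P(\mathbf V\le f)=1-\|f\|_D$ for all $f\in\bar E^-[0,1]$ with $\|f\|_\infty\le c_0$. A process $\mathbf Y$ in $\bar C^-[0,1]$ belongs to the spectral $\delta$-neighborhood of $\mathbf V$ ($\delta\in(0,1]$) if, uniformly for $f\in\bar E_1^-[0,1]$, $1-P(\mathbf Y\le cf)=(1-P(\mathbf V\le cf))(1+O(c^\delta))=\|f\|_D(1+O(c^\delta))$ as $c\downarrow 0$. *)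

theory Defs
  imports "HOL-Probability.Probability"
begin

text \<open>Functions on [0,1] are represented as real => real; only values on {0..1} matter.\<close>

definition E01 :: "(real \<Rightarrow> real) set" where
  "E01 = {f. bounded (f ` {0..1}) \<and>
             finite {t \<in> {0..1}. \<not> continuous (at t within {0..1}) f}}"

definition Eneg :: "(real \<Rightarrow> real) set" where
  "Eneg = {f \<in> E01. \<forall>t\<in>{0..1}. f t \<le> 0}"

definition supnorm :: "(real \<Rightarrow> real) \<Rightarrow> real" where
  "supnorm f = (SUP t\<in>{0..1}. \<bar>f t\<bar>)"

definition Eneg1 :: "(real \<Rightarrow> real) set" where
  "Eneg1 = {f \<in> Eneg. supnorm f = 1}"

definition prob_le :: "'a measure \<Rightarrow> ('a \<Rightarrow> real \<Rightarrow> real) \<Rightarrow> (real \<Rightarrow> real) \<Rightarrow> real" where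
  "prob_le M X f = measure M {\<omega> \<in> space M. \<forall>t\<in>{0..1}. X \<omega> t \<le> f t}"

definition Cneg_process :: "'a measure \<Rightarrow> ('a \<Rightarrow> real \<Rightarrow> real) \<Rightarrow> bool" where
  "Cneg_process M X \<longleftrightarrow> prob_space M \<and>
     (\<forall>t\<in>{0..1}. (\<lambda>\<omega>. X \<omega> t) \<in> borel_measurable M) \<and>
     (\<forall>\<omega>\<in>space M. continuous_on {0..1} (X \<omega>) \<and> (\<forall>t\<in>{0..1}. X \<omega> t \<le> 0))"

definition generator :: "'b measure \<Rightarrow> ('b \<Rightarrow> real \<Rightarrow> real) \<Rightarrow> bool" where
  "generator N Z \<longleftrightarrow> prob_space N \<and>
     (\<forall>t\<in>{0..1}. (\<lambda>\<omega>. Z \<omega> t) \<in> borel_measurable N \<and> integrable N (\<lambda>\<omega>. Z \<omega> t) \<and>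
                  (\<integral>\<omega>. Z \<omega> t \<partial>N) = 1) \<and>
     (\<forall>\<omega>\<in>space N. continuous_on {0..1} (Z \<omega>) \<and> (\<forall>t\<in>{0..1}. 0 \<le> Z \<omega> t)) \<and>
     (\<exists>m\<ge>1. AE \<omega> in N. (SUP t\<in>{0..1}. Z \<omega> t) = m)"

definition Dnorm :: "'b measure \<Rightarrow> ('b \<Rightarrow> real \<Rightarrow> real) \<Rightarrow> (real \<Rightarrow> real) \<Rightarrow> real" where
  "Dnorm N Z f = (\<integral>\<omega>. (SUP t\<in>{0..1}. \<bar>f t\<bar> * Z \<omega> t) \<partial>N)"

definition std_GPP :: "'c measure \<Rightarrow> ('c \<Rightarrow> real \<Rightarrow> real) \<Rightarrow> 'b measure \<Rightarrow> ('b \<Rightarrow> real \<Rightarrow> real) \<Rightarrow> bool" where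
  "std_GPP MV V N Z \<longleftrightarrow> Cneg_process MV V \<and>
     (\<exists>c0>0. \<forall>f\<in>Eneg. supnorm f \<le> c0 \<longrightarrow> prob_le MV V f = 1 - Dnorm N Z f)"

text \<open>Standard max-stable process: max-stability expressed through the distribution
  (eta =_D n max of n iid copies, i.e. P(eta <= f/n)^n = P(eta <= f)), standard
  negative exponential margins.\<close>
definition std_max_stable :: "'d measure \<Rightarrow> ('d \<Rightarrow> real \<Rightarrow> real) \<Rightarrow> bool" where
  "std_max_stable ME eta \<longleftrightarrow> Cneg_process ME eta \<and>
     (\<forall>n::nat. n \<ge> 1 \<longrightarrow> (\<forall>f\<in>Eneg. prob_le ME eta (\<lambda>t. f t / real n) ^ n = prob_le ME eta f)) \<and>
     (\<forall>t\<in>{0..1}. \<forall>x\<le>0. measure ME {\<omega> \<in> space ME. eta \<omega> t \<le> x} = exp x)"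

definition spectral_nbhd :: "'a measure \<Rightarrow> ('a \<Rightarrow> real \<Rightarrow> real) \<Rightarrow> 'c measure \<Rightarrow> ('c \<Rightarrow> real \<Rightarrow> real) \<Rightarrow> real \<Rightarrow> bool" where
  "spectral_nbhd M Y MV V \<delta> \<longleftrightarrow>
     (\<exists>K c1. c1 > 0 \<and> (\<forall>c. 0 < c \<and> c < c1 \<longrightarrow> (\<forall>f\<in>Eneg1.
        \<bar>(1 - prob_le M Y (\<lambda>t. c * f t)) - (1 - prob_le MV V (\<lambda>t. c * f t))\<bar>
          \<le> K * c powr \<delta> * (1 - prob_le MV V (\<lambda>t. c * f t)))))"

definition max_rate :: "'a measure \<Rightarrow> ('a \<Rightarrow> real \<Rightarrow> real) \<Rightarrow> 'd measure \<Rightarrow> ('d \<Rightarrow> real \<Rightarrow> real) \<Rightarrow> real \<Rightarrow> bool" where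
  "max_rate M Y ME eta \<delta> \<longleftrightarrow>
     (\<exists>K. \<forall>\<^sub>F n in sequentially. \<forall>f\<in>Eneg.
        \<bar>prob_le M Y (\<lambda>t. f t / real n) ^ n - prob_le ME eta f\<bar> \<le> K * real n powr (-\<delta>))"

definition Hf :: "'a measure \<Rightarrow> ('a \<Rightarrow> real \<Rightarrow> real) \<Rightarrow> (real \<Rightarrow> real) \<Rightarrow> real \<Rightarrow> real" where
  "Hf M Y f c = prob_le M Y (\<lambda>t. c * \<bar>f t\<bar>)"

definition rf :: "'a measure \<Rightarrow> ('a \<Rightarrow> real \<Rightarrow> real) \<Rightarrow> ((real \<Rightarrow> real) \<Rightarrow> real \<Rightarrow> real) \<Rightarrow> (real \<Rightarrow> real) \<Rightarrow> real \<Rightarrow> real" where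
  "rf M Y h f c = - c * h f c / (1 - Hf M Y f c) - 1"

definition von_mises :: "'a measure \<Rightarrow> ('a \<Rightarrow> real \<Rightarrow> real) \<Rightarrow> bool" where
  "von_mises M Y \<longleftrightarrow> (\<exists>\<epsilon>>0. \<exists>h.
     (\<forall>f\<in>Eneg1. \<forall>c\<in>{-\<epsilon><..<0}. (Hf M Y f has_real_derivative h f c) (at c)) \<and>
     (\<forall>f\<in>Eneg1. (rf M Y h f \<longlongrightarrow> 0) (at_left 0)) \<and>
     (\<forall>f\<in>Eneg1. \<forall>c\<in>{-\<epsilon><..<0}. (\<lambda>t. rf M Y h f t / t) integrable_on {c..0}) \<and>
     (\<forall>e>0. \<forall>\<^sub>F c in at_left 0. \<forall>f\<in>Eneg1.
        \<bar>integral {c..0} (\<lambda>t. rf M Y h f t / t)\<bar> \<le> e))"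

end

theory Submission imports Defs begin

lemma E01_bdd: "f \<in> E01 \<Longrightarrow> bdd_above ((\<lambda>t. \<bar>f t\<bar>) ` {0..1::real})"
proof -
  assume "f \<in> E01"
  then have "bounded (f ` {0..1})" by (simp add: E01_def)
  then obtain B where B: "\<forall>x\<in>f ` {0..1}. norm x \<le> B" by (auto simp: bounded_iff)
  show ?thesis by (rule bdd_aboveI2[where M=B]) (use B in auto)
qed

lemma supnorm_ge: "f \<in> E01 \<Longrightarrow> t \<in> {0..1} \<Longrightarrow> \<bar>f t\<bar> \<le> supnorm f"
  unfolding supnorm_def by (rule cSUP_upper) (auto intro: E01_bdd)

lemma supnorm_nonneg: "f \<in> E01 \<Longrightarrow> 0 \<le> supnorm f"
  using supnorm_ge[of f 0] by force

lemma supnorm_le: "(\<And>t. t \<in> {0..1} \<Longrightarrow> \<bar>f t\<bar> \<le> B) \<Longrightarrow> supnorm f \<le> B"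
  unfolding supnorm_def by (rule cSUP_least) auto

lemma E01_scale: assumes "f \<in> E01" "0 \<le> c" shows "(\<lambda>t. c * f t) \<in> E01"
proof -
  have "bounded (f ` {0..1})" using assms by (simp add: E01_def)
  then have b: "bounded ((\<lambda>t. c * f t) ` {0..1})"
    using bounded_scaling[of "f ` {0..1}" c] by (simp add: image_image)
  have "{t \<in> {0..1}. \<not> continuous (at t within {0..1}) (\<lambda>t. c * f t)}
        \<subseteq> {t \<in> {0..1}. \<not> continuous (at t within {0..1}) f}"
    by (auto intro: continuous_mult continuous_const)
  moreover have "finite {t \<in> {0..1}. \<not> continuous (at t within {0..1}) f}"
    using assms by (simp add: E01_def)
  ultimately show ?thesis using b unfolding E01_def by (auto intro: finite_subset)
qed

lemma Eneg_scale: assumes "f \<in> Eneg" "0 \<le> c" shows "(\<lambda>t. c * f t) \<in> Eneg"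
  using assms E01_scale[of f c] unfolding Eneg_def by (auto simp: mult_nonneg_nonpos)

lemma Eneg_div: assumes "f \<in> Eneg" "0 < r" shows "(\<lambda>t. f t / r) \<in> Eneg"
proof -
  have "(\<lambda>t. f t / r) = (\<lambda>t. (1/r) * f t)" by auto
  then show ?thesis using Eneg_scale[OF assms(1), of "1/r"] assms by simp
qed

lemma supnorm_scale: assumes "f \<in> E01" "0 \<le> c" shows "supnorm (\<lambda>t. c * f t) = c * supnorm f"
proof (rule antisym)
  show "supnorm (\<lambda>t. c * f t) \<le> c * supnorm f"
    by (rule supnorm_le) (use assms supnorm_ge in \<open>auto simp: abs_mult intro: mult_left_mono\<close>)
  show "c * supnorm f \<le> supnorm (\<lambda>t. c * f t)"
  proof (cases "c = 0")
    case True then show ?thesis using supnorm_nonneg[OF E01_scale[OF assms]] by simp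
  next
    case False
    then have "c > 0" using assms by simp
    have "supnorm f \<le> supnorm (\<lambda>t. c * f t) / c"
      by (rule supnorm_le) (use \<open>c>0\<close> supnorm_ge[OF E01_scale[OF assms]] in \<open>auto simp: abs_mult field_simps\<close>)
    then show ?thesis using \<open>c>0\<close> by (simp add: field_simps)
  qed
qed

lemma supnorm_div: assumes "f \<in> E01" "0 < r" shows "supnorm (\<lambda>t. f t / r) = supnorm f / r"
proof -
  have "(\<lambda>t. f t / r) = (\<lambda>t. (1/r) * f t)" by auto
  then show ?thesis using supnorm_scale[OF assms(1), of "1/r"] assms by simp
qed

lemma pow_diff_upper:
  fixes a b M :: real
  assumes "0 \<le> a" "a \<le> M" "0 \<le> b" "b \<le> M"
  shows "\<bar>a ^ n - b ^ n\<bar> \<le> real n * M ^ (n - 1) * \<bar>a - b\<bar>"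
proof (induction n)
  case 0 then show ?case by simp
next
  case (Suc n)
  have M0: "0 \<le> M" using assms by simp
  have "a ^ Suc n - b ^ Suc n = a * (a ^ n - b ^ n) + b ^ n * (a - b)" by (simp add: algebra_simps)
  then have "\<bar>a ^ Suc n - b ^ Suc n\<bar> \<le> \<bar>a * (a ^ n - b ^ n)\<bar> + \<bar>b ^ n * (a - b)\<bar>"
    by (metis abs_triangle_ineq)
  also have "\<dots> = a * \<bar>a ^ n - b ^ n\<bar> + b ^ n * \<bar>a - b\<bar>"
    using assms by (simp add: abs_mult)
  also have "\<dots> \<le> M * (real n * M ^ (n - 1) * \<bar>a - b\<bar>) + M ^ n * \<bar>a - b\<bar>"
    apply (rule add_mono)
     apply (rule mult_mono) using Suc assms apply (simp_all)[4]
    apply (rule mult_right_mono) using assms by (simp_all add: power_mono)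
  also have "\<dots> = real (Suc n) * M ^ (Suc n - 1) * \<bar>a - b\<bar>"
    by (cases n) (auto simp: algebra_simps)
  finally show ?case .
qed

lemma pow_diff_lower:
  fixes a b :: real
  assumes "0 \<le> a" "0 \<le> b"
  shows "real n * (min a b) ^ (n - 1) * \<bar>a - b\<bar> \<le> \<bar>a ^ n - b ^ n\<bar>"
proof -
  have key: "real n * y ^ (n - 1) * (x - y) \<le> x ^ n - y ^ n" if "0 \<le> y" "y \<le> x" for x y :: real
  proof (induction n)
    case 0 then show ?case by simp
  next
    case (Suc n)
    have "x ^ Suc n - y ^ Suc n = x * (x ^ n - y ^ n) + y ^ n * (x - y)" by (simp add: algebra_simps)
    also have "\<dots> \<ge> y * (real n * y ^ (n - 1) * (x - y)) + y ^ n * (x - y)"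
      apply (rule add_right_mono) apply (rule mult_mono) using Suc that by auto
    finally have "x ^ Suc n - y ^ Suc n \<ge> y * (real n * y ^ (n - 1) * (x - y)) + y ^ n * (x - y)" .
    moreover have "y * (real n * y ^ (n - 1) * (x - y)) + y ^ n * (x - y) = real (Suc n) * y ^ (Suc n - 1) * (x - y)"
      by (cases n) (auto simp: algebra_simps)
    ultimately show ?case by simp
  qed
  show ?thesis
  proof (cases "b \<le> a")
    case True
    have "b ^ n \<le> a ^ n" using True assms by (simp add: power_mono)
    then show ?thesis using key[of b a] True assms by (simp add: min_def)
  next
    case False
    have "a ^ n \<le> b ^ n" using False assms by (simp add: power_mono)
    then show ?thesis using key[of a b] False assms by (simp add: min_def)
  qed
qed

lemma exp_neg_taylor:
  fixes y :: real assumes "0 \<le> y"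
  shows "0 \<le> exp (- y) - 1 + y" "exp (- y) - 1 + y \<le> y^2 / 2"
proof -
  show "0 \<le> exp (- y) - 1 + y" using exp_ge_add_one_self[of "-y"] by simp
  define g where "g u = u^2/2 - u + 1 - exp (- u)" for u :: real
  have d: "(g has_real_derivative (u - 1 + exp (-u))) (at u)" for u
    unfolding g_def by (auto intro!: derivative_eq_intros)
  have "g 0 \<le> g y"
  proof (rule DERIV_nonneg_imp_nondecreasing[OF assms])
    fix u assume "0 \<le> u" "u \<le> y"
    show "\<exists>d. (g has_real_derivative d) (at u) \<and> 0 \<le> d"
      using d exp_ge_add_one_self[of "-u"] by (intro exI[of _ "u - 1 + exp (-u)"]) auto
  qed
  then show "exp (- y) - 1 + y \<le> y^2 / 2" by (simp add: g_def)
qed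

lemma exp_poly_bound:
  fixes x :: real assumes "0 \<le> x"
  shows "x \<le> 4 * exp (x/4)" "x^2 \<le> 64 * exp (x/4)"
proof -
  have "1 + x/4 \<le> exp (x/4)" by (rule exp_ge_add_one_self)
  then show "x \<le> 4 * exp (x/4)" using assms by linarith
  have "exp (x/8) \<ge> 1 + x/8" by (rule exp_ge_add_one_self)
  then have "(x/8)^2 \<le> (exp (x/8))^2" using assms by (intro power_mono) linarith+
  also have "(exp (x/8))^2 = exp (x/4)" by (simp add: power2_eq_square exp_add[symmetric])
  finally show "x^2 \<le> 64 * exp (x/4)" by (simp add: power_divide)
qed

lemma exp_lin_bound:
  fixes g x :: real assumes "0 < g" "0 < x" shows "exp (- (g * x)) \<le> 1 / (g * x)"
proof -
  have "1 + g * x \<le> exp (g * x)" by (rule exp_ge_add_one_self)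
  then have "g * x \<le> exp (g * x)" by linarith
  then show ?thesis using assms by (simp add: exp_minus field_simps)
qed


lemma prob_le_bounds: "prob_space M \<Longrightarrow> 0 \<le> prob_le M X f \<and> prob_le M X f \<le> 1"
  unfolding prob_le_def using prob_space.prob_le_1 measure_nonneg by blast

lemma prob_le_zero:
  assumes "Cneg_process M X" "\<And>t. t \<in> {0..1} \<Longrightarrow> f t = 0"
  shows "prob_le M X f = 1"
proof -
  have "{\<omega> \<in> space M. \<forall>t\<in>{0..1}. X \<omega> t \<le> f t} = space M"
    using assms unfolding Cneg_process_def by auto
  then show ?thesis using assms(1) unfolding prob_le_def Cneg_process_def
    by (simp add: prob_space.prob_space)
qed

lemma D_div:
  assumes eta: "std_max_stable ME eta"
    and eta_df: "\<forall>f\<in>Eneg. prob_le ME eta f = exp (- Dnorm N Z f)"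
    and g: "g \<in> Eneg" and n: "n \<ge> 1"
  shows "Dnorm N Z (\<lambda>t. g t / real n) = Dnorm N Z g / real n"
proof -
  have gn: "(\<lambda>t. g t / real n) \<in> Eneg" using Eneg_div[OF g] n by simp
  have "prob_le ME eta (\<lambda>t. g t / real n) ^ n = prob_le ME eta g"
    using eta g n unfolding std_max_stable_def by blast
  then have "exp (- Dnorm N Z (\<lambda>t. g t / real n)) ^ n = exp (- Dnorm N Z g)"
    using eta_df gn g by simp
  moreover have "exp (real n * (- Dnorm N Z (\<lambda>t. g t / real n))) = exp (- Dnorm N Z (\<lambda>t. g t / real n)) ^ n"
    by (rule exp_of_nat_mult)
  ultimately have "exp (real n * (- Dnorm N Z (\<lambda>t. g t / real n))) = exp (- Dnorm N Z g)"
    by simp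
  then have "real n * Dnorm N Z (\<lambda>t. g t / real n) = Dnorm N Z g" by simp
  then show ?thesis using n by (simp add: field_simps)
qed

lemma D_ge:
  assumes eta: "std_max_stable ME eta"
    and eta_df: "\<forall>f\<in>Eneg. prob_le ME eta f = exp (- Dnorm N Z f)"
    and g: "g \<in> Eneg"
  shows "supnorm g \<le> Dnorm N Z g"
proof (rule supnorm_le)
  fix t :: real assume t: "t \<in> {0..1}"
  have C: "Cneg_process ME eta" using eta unfolding std_max_stable_def by blast
  then have ps: "prob_space ME" and meas: "(\<lambda>\<omega>. eta \<omega> t) \<in> borel_measurable ME"
    using t unfolding Cneg_process_def by auto
  have gt: "g t \<le> 0" using g t unfolding Eneg_def by auto
  have S: "{\<omega> \<in> space ME. eta \<omega> t \<le> g t} \<in> sets ME" using meas by measurable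
  have "exp (- Dnorm N Z g) = prob_le ME eta g" using eta_df g by simp
  also have "\<dots> \<le> measure ME {\<omega> \<in> space ME. eta \<omega> t \<le> g t}"
    unfolding prob_le_def
    by (rule finite_measure.finite_measure_mono[OF prob_space.axioms(1)[OF ps] _ S]) (use t in auto)
  also have "\<dots> = exp (g t)" using eta t gt unfolding std_max_stable_def by blast
  finally have "- Dnorm N Z g \<le> g t" by simp
  then show "\<bar>g t\<bar> \<le> Dnorm N Z g" using gt by simp
qed

lemma D_upper:
  assumes eta: "std_max_stable ME eta"
    and eta_df: "\<forall>f\<in>Eneg. prob_le ME eta f = exp (- Dnorm N Z f)"
    and V: "std_GPP MV V N Z"
  obtains N0 :: nat where "N0 \<ge> 1" "\<And>g. g \<in> Eneg \<Longrightarrow> supnorm g \<le> 2 \<Longrightarrow> Dnorm N Z g \<le> real N0"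
proof -
  obtain c0 where c0: "c0 > 0" "\<forall>f\<in>Eneg. supnorm f \<le> c0 \<longrightarrow> prob_le MV V f = 1 - Dnorm N Z f"
    using V unfolding std_GPP_def by blast
  have psV: "prob_space MV" using V unfolding std_GPP_def Cneg_process_def by blast
  define N0 where "N0 = nat \<lceil>2 / c0\<rceil> + 1"
  have N0: "real N0 \<ge> 2 / c0" "N0 \<ge> 1" unfolding N0_def by linarith+
  show ?thesis
  proof (rule that[OF N0(2)])
    fix g assume g: "g \<in> Eneg" "supnorm g \<le> 2"
    have gE: "g \<in> E01" using g unfolding Eneg_def by simp
    have pos: "real N0 > 0" using N0 by simp
    have "supnorm (\<lambda>t. g t / real N0) = supnorm g / real N0" using supnorm_div[OF gE pos] .
    also have "\<dots> \<le> 2 / real N0" using g pos by (simp add: divide_right_mono)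
    also have "\<dots> \<le> c0" using N0 c0 pos by (simp add: field_simps)
    finally have "supnorm (\<lambda>t. g t / real N0) \<le> c0" .
    moreover have gN: "(\<lambda>t. g t / real N0) \<in> Eneg" using Eneg_div[OF g(1) pos] .
    ultimately have "prob_le MV V (\<lambda>t. g t / real N0) = 1 - Dnorm N Z (\<lambda>t. g t / real N0)"
      using c0 by blast
    then have "Dnorm N Z (\<lambda>t. g t / real N0) \<le> 1" using prob_le_bounds[OF psV] by smt
    then have "Dnorm N Z g / real N0 \<le> 1" using D_div[OF eta eta_df g(1) N0(2)] by simp
    then show "Dnorm N Z g \<le> real N0" using pos by (simp add: field_simps)
  qed
qed


lemma part2:
  assumes Y: "Cneg_process M Y"
    and V: "std_GPP MV V N Z"
    and eta: "std_max_stable ME eta"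
    and eta_df: "\<forall>f\<in>Eneg. prob_le ME eta f = exp (- Dnorm N Z f)"
    and d: "0 < \<delta>" "\<delta> \<le> 1"
    and mr: "max_rate M Y ME eta \<delta>"
  shows "spectral_nbhd M Y MV V \<delta>"
proof -
  have psY: "prob_space M" using Y unfolding Cneg_process_def by blast
  obtain c0 where c0: "c0 > 0" "\<forall>f\<in>Eneg. supnorm f \<le> c0 \<longrightarrow> prob_le MV V f = 1 - Dnorm N Z f"
    using V unfolding std_GPP_def by blast
  obtain N0 :: nat where N0: "N0 \<ge> 1" "\<And>g. g \<in> Eneg \<Longrightarrow> supnorm g \<le> 2 \<Longrightarrow> Dnorm N Z g \<le> real N0"
    using D_upper[OF eta eta_df V] by blast
  obtain K where "\<forall>\<^sub>F n in sequentially. \<forall>f\<in>Eneg.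
        \<bar>prob_le M Y (\<lambda>t. f t / real n) ^ n - prob_le ME eta f\<bar> \<le> K * real n powr (-\<delta>)"
    using mr unfolding max_rate_def by blast
  then obtain N1 :: nat where N1: "\<And>n. n \<ge> N1 \<Longrightarrow> \<forall>f\<in>Eneg.
        \<bar>prob_le M Y (\<lambda>t. f t / real n) ^ n - prob_le ME eta f\<bar> \<le> K * real n powr (-\<delta>)"
    unfolding eventually_sequentially by blast
  define Kp where "Kp = \<bar>K\<bar>"
  have Kp: "0 \<le> Kp" "K \<le> Kp" unfolding Kp_def by auto
  define e0 where "e0 = exp (- real N0)"
  have e0: "0 < e0" "e0 \<le> 1" unfolding e0_def using N0 by auto
  define c3 where "c3 = (e0 / (2 * Kp + 1)) powr (1 / \<delta>)"
  have c3: "0 < c3" unfolding c3_def using e0 Kp by simp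
  have c3d: "c3 powr \<delta> = e0 / (2 * Kp + 1)" unfolding c3_def using e0 Kp d
    by (simp add: powr_powr)
  define c1 where "c1 = min (min c0 (1/2)) (min (1 / (real N1 + 1)) c3)"
  have c1: "c1 > 0" unfolding c1_def using c0 c3 by auto
  define K' where "K' = 2 * exp (real N0) * Kp + real N0 / 2"
  show ?thesis unfolding spectral_nbhd_def
  proof (rule exI[of _ K'], rule exI[of _ c1], intro conjI c1 allI impI ballI)
    fix c f assume cc: "0 < c \<and> c < c1" and f: "f \<in> Eneg1"
    have c: "0 < c" "c < c0" "c < 1/2" "c < 1 / (real N1 + 1)" "c < c3"
      using cc unfolding c1_def by auto
    have fE: "f \<in> Eneg" "supnorm f = 1" using f unfolding Eneg1_def by auto
    have fE01: "f \<in> E01" using fE unfolding Eneg_def by simp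
    define n where "n = nat \<lceil>1 / c\<rceil>"
    have n1: "real n \<ge> 1 / c" unfolding n_def by linarith
    have n2: "real n \<le> 1 / c + 1"
    proof -
      have "0 < 1 / c" using c by simp
      then have "0 \<le> \<lceil>1 / c\<rceil>" by linarith
      then have "real n = real_of_int \<lceil>1 / c\<rceil>" unfolding n_def by simp
      moreover have "real_of_int \<lceil>1 / c\<rceil> \<le> 1 / c + 1" by (rule of_int_ceiling_le_add_one)
      ultimately show ?thesis by simp
    qed
    have npos: "real n > 0" using n1 c by (smt (verit) divide_pos_pos)
    have nge1: "n \<ge> 1" using npos by simp
    have nN1: "n \<ge> N1"
    proof -
      have "1 / c > real N1 + 1" using c by (simp add: field_simps)
      then show ?thesis using n1 by linarith
    qed
    define s where "s = c * real n"
    have s: "1 \<le> s" "s \<le> 2" unfolding s_def using n1 n2 c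
      by (simp_all add: field_simps) 
    define g where "g = (\<lambda>t. s * f t)"
    have gE: "g \<in> Eneg" unfolding g_def using Eneg_scale[OF fE(1)] s by simp
    have gs: "supnorm g = s" unfolding g_def using supnorm_scale[OF fE01] s fE by simp
    have cf_eq: "(\<lambda>t. g t / real n) = (\<lambda>t. c * f t)"
      unfolding g_def s_def using npos by (auto simp: field_simps)
    have cfE: "(\<lambda>t. c * f t) \<in> Eneg" using Eneg_scale[OF fE(1)] c by simp
    have cfs: "supnorm (\<lambda>t. c * f t) = c" using supnorm_scale[OF fE01] c fE by simp
    define y where "y = Dnorm N Z (\<lambda>t. c * f t)"
    have PV: "prob_le MV V (\<lambda>t. c * f t) = 1 - y"
      unfolding y_def using c0 cfE cfs c by auto
    have Dg: "Dnorm N Z g \<le> real N0" using N0(2)[OF gE] gs s by simp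
    have y_eq: "y = Dnorm N Z g / real n"
      unfolding y_def using D_div[OF eta eta_df gE nge1] cf_eq by simp
    have yc: "c \<le> y" unfolding y_def using D_ge[OF eta eta_df cfE] cfs by simp
    have yN: "y \<le> real N0 / real n" using y_eq Dg npos by (simp add: divide_right_mono)
    define a where "a = prob_le M Y (\<lambda>t. c * f t)"
    define b where "b = exp (- y)"
    have a01: "0 \<le> a" "a \<le> 1" unfolding a_def using prob_le_bounds[OF psY] by auto
    have b01: "0 < b" "b \<le> 1" unfolding b_def using yc c by auto
    have bn: "b ^ n = exp (- Dnorm N Z g)"
    proof -
      have "b ^ n = exp (real n * (- y))" unfolding b_def by (rule exp_of_nat_mult[symmetric])
      also have "real n * (- y) = - Dnorm N Z g" using y_eq npos by simp
      finally show ?thesis .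
    qed
    have peta: "prob_le ME eta g = b ^ n" using eta_df gE bn by simp
    have diff: "\<bar>a ^ n - b ^ n\<bar> \<le> Kp * real n powr (-\<delta>)"
    proof -
      have "\<bar>a ^ n - b ^ n\<bar> \<le> K * real n powr (-\<delta>)"
        using N1[OF nN1] gE peta cf_eq unfolding a_def by force
      also have "\<dots> \<le> Kp * real n powr (-\<delta>)" using Kp by (intro mult_right_mono) auto
      finally show ?thesis .
    qed
    have npd: "real n powr (-\<delta>) = (1 / real n) powr \<delta>"
      using npos by (simp add: powr_minus_divide powr_divide)
    have inv_n: "1 / real n \<le> c" using n1 c npos by (simp add: field_simps)
    have small: "Kp * real n powr (-\<delta>) \<le> e0 / 2"
    proof -
      have "(1 / real n) powr \<delta> \<le> c3 powr \<delta>"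
        using inv_n c d by (intro powr_mono2) auto
      then have "real n powr (-\<delta>) \<le> e0 / (2 * Kp + 1)" using npd c3d by simp
      then have "Kp * real n powr (-\<delta>) \<le> Kp * (e0 / (2 * Kp + 1))"
        using Kp by (intro mult_left_mono) auto
      also have "\<dots> \<le> e0 / 2" using Kp e0 by (simp add: field_simps)
      finally show ?thesis .
    qed
    have bnge: "b ^ n \<ge> e0" unfolding bn e0_def using Dg by simp
    have angle: "a ^ n \<ge> e0 / 2" using diff small bnge by linarith
    have minpow: "(min a b) ^ (n - 1) \<ge> e0 / 2"
    proof -
      have "(min a b) ^ n \<ge> e0 / 2" using angle bnge e0 by (cases "a \<le> b") (auto simp: min_def)
      moreover have "(min a b) ^ n \<le> (min a b) ^ (n - 1)"
        using a01 b01 nge1 by (intro power_decreasing) auto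
      ultimately show ?thesis by simp
    qed
    have ab: "\<bar>a - b\<bar> \<le> 2 * exp (real N0) * Kp * real n powr (-\<delta>) / real n"
    proof -
      have "real n * (e0 / 2) * \<bar>a - b\<bar> \<le> real n * (min a b) ^ (n - 1) * \<bar>a - b\<bar>"
        using minpow npos by (intro mult_right_mono mult_left_mono) auto
      also have "\<dots> \<le> \<bar>a ^ n - b ^ n\<bar>" using pow_diff_lower a01 b01 by simp
      also have "\<dots> \<le> Kp * real n powr (-\<delta>)" by (rule diff)
      finally have "real n * (e0 / 2) * \<bar>a - b\<bar> \<le> Kp * real n powr (-\<delta>)" .
      moreover have "exp (real N0) * e0 = 1" unfolding e0_def by (simp add: exp_minus)
      ultimately have "exp (real N0) * (e0 * (real n * \<bar>a - b\<bar>)) \<le> exp (real N0) * (2 * Kp * real n powr (-\<delta>))"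
        by (intro mult_left_mono) (auto simp: field_simps)
      moreover have "exp (real N0) * (e0 * (real n * \<bar>a - b\<bar>)) = real n * \<bar>a - b\<bar>"
        using \<open>exp (real N0) * e0 = 1\<close> by (metis mult.assoc mult_1)
      ultimately have "real n * \<bar>a - b\<bar> \<le> exp (real N0) * (2 * Kp * real n powr (-\<delta>))" by simp
      then show ?thesis using npos by (simp add: field_simps)
    qed
    have tay: "\<bar>b - (1 - y)\<bar> \<le> y^2 / 2" unfolding b_def using exp_neg_taylor[of y] yc c by auto
    have cpow: "c \<le> c powr \<delta>"
      using powr_mono'[of \<delta> 1 c] c d by simp
    have t1: "real n powr (-\<delta>) / real n \<le> c powr \<delta> * y"
    proof -
      have "real n powr (-\<delta>) / real n = (1 / real n) powr \<delta> * (1 / real n)" using npd by simp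
      also have "\<dots> \<le> c powr \<delta> * c"
        using inv_n npos d by (intro mult_mono powr_mono2) auto
      also have "\<dots> \<le> c powr \<delta> * y" using yc c by (intro mult_left_mono) auto
      finally show ?thesis .
    qed
    have t2: "y^2 / 2 \<le> real N0 / 2 * c powr \<delta> * y"
    proof -
      have "y \<le> real N0 * (1 / real n)" using yN by simp
      also have "\<dots> \<le> real N0 * c" using inv_n by (intro mult_left_mono) auto
      also have "\<dots> \<le> real N0 * c powr \<delta>" using cpow by (intro mult_left_mono) auto
      finally have "y * y \<le> real N0 * c powr \<delta> * y" using yc c by (intro mult_right_mono) auto
      then show ?thesis by (simp add: power2_eq_square)
    qed
    have "\<bar>a - (1 - y)\<bar> \<le> \<bar>a - b\<bar> + \<bar>b - (1 - y)\<bar>" by simp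
    also have "\<dots> \<le> 2 * exp (real N0) * Kp * (real n powr (-\<delta>) / real n) + real N0 / 2 * c powr \<delta> * y"
      using ab tay t2 by simp
    also have "\<dots> \<le> 2 * exp (real N0) * Kp * (c powr \<delta> * y) + real N0 / 2 * c powr \<delta> * y"
      using t1 Kp by (intro add_right_mono mult_left_mono) auto
    also have "\<dots> = K' * c powr \<delta> * y" unfolding K'_def by (simp add: algebra_simps)
    finally have "\<bar>a - (1 - y)\<bar> \<le> K' * c powr \<delta> * y" .
    then show "\<bar>(1 - prob_le M Y (\<lambda>t. c * f t)) - (1 - prob_le MV V (\<lambda>t. c * f t))\<bar>
          \<le> K' * c powr \<delta> * (1 - prob_le MV V (\<lambda>t. c * f t))"
      unfolding PV a_def[symmetric] by (simp add: abs_minus_commute)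
  qed
qed


lemma powr_le_1_plus: fixes s d :: real assumes "0 \<le> s" "0 < d" "d \<le> 1" shows "s powr d \<le> 1 + s"
proof (cases "s \<le> 1")
  case True
  then have "s powr d \<le> 1 powr d" using assms powr_mono2[of d s 1] by linarith
  then have "s powr d \<le> 1" by simp
  then show ?thesis using assms by simp
next
  case False
  then have "s powr d \<le> s powr 1" using assms by (intro powr_mono) auto
  then show ?thesis using False by simp
qed

lemma inv_le_powr:
  fixes n d :: real assumes "1 \<le> n" "0 < d" "d \<le> 1" shows "1 / n \<le> n powr (- d)"
proof -
  have "n powr (-1) \<le> n powr (- d)" using assms by (intro powr_mono) auto
  then show ?thesis using assms by (simp add: powr_neg_one)
qed

lemma part1:
  assumes Y: "Cneg_process M Y"
    and V: "std_GPP MV V N Z"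
    and eta: "std_max_stable ME eta"
    and eta_df: "\<forall>f\<in>Eneg. prob_le ME eta f = exp (- Dnorm N Z f)"
    and d: "0 < \<delta>" "\<delta> \<le> 1"
    and sp: "spectral_nbhd M Y MV V \<delta>"
  shows "max_rate M Y ME eta \<delta>"
proof -
  have psY: "prob_space M" using Y unfolding Cneg_process_def by blast
  have Ceta: "Cneg_process ME eta" using eta unfolding std_max_stable_def by blast
  obtain c0 where c0: "c0 > 0" "\<forall>f\<in>Eneg. supnorm f \<le> c0 \<longrightarrow> prob_le MV V f = 1 - Dnorm N Z f"
    using V unfolding std_GPP_def by blast
  obtain N0 :: nat where N0: "N0 \<ge> 1" "\<And>g. g \<in> Eneg \<Longrightarrow> supnorm g \<le> 2 \<Longrightarrow> Dnorm N Z g \<le> real N0"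
    using D_upper[OF eta eta_df V] by blast
  obtain K c1 where Kc1: "c1 > 0" "\<And>c f. 0 < c \<Longrightarrow> c < c1 \<Longrightarrow> f \<in> Eneg1 \<Longrightarrow>
        \<bar>(1 - prob_le M Y (\<lambda>t. c * f t)) - (1 - prob_le MV V (\<lambda>t. c * f t))\<bar>
          \<le> K * c powr \<delta> * (1 - prob_le MV V (\<lambda>t. c * f t))"
    using sp unfolding spectral_nbhd_def by blast
  define Kp where "Kp = \<bar>K\<bar>"
  have Kp: "0 \<le> Kp" "K \<le> Kp" unfolding Kp_def by auto
  define c3 where "c3 = (1 / (2 * Kp + 1)) powr (1 / \<delta>)"
  have c3: "0 < c3" unfolding c3_def using Kp by simp
  have c3d: "c3 powr \<delta> = 1 / (2 * Kp + 1)" unfolding c3_def using Kp d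
    by (simp add: powr_powr)
  have key: "\<bar>prob_le M Y (\<lambda>t. c * f t) - (1 - Dnorm N Z (\<lambda>t. c * f t))\<bar>
               \<le> Dnorm N Z (\<lambda>t. c * f t) / 2"
    and keyK: "\<bar>prob_le M Y (\<lambda>t. c * f t) - (1 - Dnorm N Z (\<lambda>t. c * f t))\<bar>
               \<le> Kp * c powr \<delta> * Dnorm N Z (\<lambda>t. c * f t)"
    if c: "0 < c" "c < c1" "c \<le> c0" "c < c3" and f: "f \<in> Eneg1" for c f
  proof -
    have fE: "f \<in> Eneg" "supnorm f = 1" using f unfolding Eneg1_def by auto
    have fE01: "f \<in> E01" using fE unfolding Eneg_def by simp
    have cfE: "(\<lambda>t. c * f t) \<in> Eneg" using Eneg_scale[OF fE(1)] c by simp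
    have cfs: "supnorm (\<lambda>t. c * f t) = c" using supnorm_scale[OF fE01] c fE by simp
    have PV: "prob_le MV V (\<lambda>t. c * f t) = 1 - Dnorm N Z (\<lambda>t. c * f t)"
      using c0 cfE cfs c by auto
    have Dn: "0 \<le> Dnorm N Z (\<lambda>t. c * f t)" using D_ge[OF eta eta_df cfE] cfs c by simp
    have "\<bar>prob_le M Y (\<lambda>t. c * f t) - (1 - Dnorm N Z (\<lambda>t. c * f t))\<bar>
       = \<bar>(1 - prob_le M Y (\<lambda>t. c * f t)) - (1 - prob_le MV V (\<lambda>t. c * f t))\<bar>"
      using PV by simp
    also have "\<dots> \<le> K * c powr \<delta> * (1 - prob_le MV V (\<lambda>t. c * f t))" using Kc1(2)[OF c(1,2) f] .
    also have "\<dots> = K * c powr \<delta> * Dnorm N Z (\<lambda>t. c * f t)" using PV by simp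
    also have "\<dots> \<le> Kp * c powr \<delta> * Dnorm N Z (\<lambda>t. c * f t)"
      using Kp Dn by (intro mult_right_mono) auto
    finally have k1: "\<bar>prob_le M Y (\<lambda>t. c * f t) - (1 - Dnorm N Z (\<lambda>t. c * f t))\<bar>
               \<le> Kp * c powr \<delta> * Dnorm N Z (\<lambda>t. c * f t)" .
    then show "\<bar>prob_le M Y (\<lambda>t. c * f t) - (1 - Dnorm N Z (\<lambda>t. c * f t))\<bar>
               \<le> Kp * c powr \<delta> * Dnorm N Z (\<lambda>t. c * f t)" .
    have k2: "Kp * c powr \<delta> \<le> 1 / 2"
    proof -
      have "c powr \<delta> \<le> c3 powr \<delta>" using c d by (intro powr_mono2) auto
      then have "Kp * c powr \<delta> \<le> Kp * (1 / (2 * Kp + 1))" using c3d Kp by (intro mult_left_mono) auto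
      also have "\<dots> \<le> 1 / 2" using Kp by (simp add: field_simps)
      finally show ?thesis .
    qed
    have "Kp * c powr \<delta> * Dnorm N Z (\<lambda>t. c * f t) \<le> 1 / 2 * Dnorm N Z (\<lambda>t. c * f t)"
      using mult_right_mono[OF k2 Dn] .
    then show "\<bar>prob_le M Y (\<lambda>t. c * f t) - (1 - Dnorm N Z (\<lambda>t. c * f t))\<bar>
               \<le> Dnorm N Z (\<lambda>t. c * f t) / 2"
      using k1 by simp
  qed
  define NN where "NN = nat \<lceil>max (1 / min (min c1 c0) c3) (3 * real N0)\<rceil> + 1"
  have NN1: "1 / real NN < min (min c1 c0) c3"
  proof -
    define m where "m = min (min c1 c0) c3"
    have mpos: "m > 0" unfolding m_def using c0 c3 Kc1 by simp
    have "real NN > 1 / m" unfolding NN_def m_def by linarith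
    then have "1 < real NN * m" using mpos by (simp add: divide_less_eq)
    moreover have "real NN > 0" using mpos \<open>real NN > 1 / m\<close> by (smt (verit) divide_pos_pos)
    ultimately have "1 / real NN < m" by (simp add: divide_less_eq mult.commute)
    then show ?thesis unfolding m_def .
  qed
  have NN2: "real NN \<ge> 3 * real N0" "NN \<ge> 1" unfolding NN_def by linarith+
  have NNpos: "real NN > 0" using NN2 by simp
  define Kt where "Kt = max ((Kp + 1/2) * 68) (2 * real NN)"
  show ?thesis unfolding max_rate_def
  proof (rule exI[of _ Kt], unfold eventually_sequentially, rule exI[of _ 2], intro allI impI ballI)
    fix n :: nat and g assume n: "2 \<le> n" and g: "g \<in> Eneg"
    have npos: "real n > 0" "n \<ge> 1" using n by auto
    have gE01: "g \<in> E01" and gneg: "\<And>t. t \<in> {0..1} \<Longrightarrow> g t \<le> 0" using g unfolding Eneg_def by auto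
    define s where "s = supnorm g"
    have s0: "0 \<le> s" unfolding s_def using supnorm_nonneg[OF gE01] .
    define x where "x = Dnorm N Z g"
    have xs: "s \<le> x" unfolding x_def s_def using D_ge[OF eta eta_df g] .
    define a where "a = prob_le M Y (\<lambda>t. g t / real n)"
    have a01: "0 \<le> a" "a \<le> 1" unfolding a_def using prob_le_bounds[OF psY] by auto
    have peta: "prob_le ME eta g = exp (- x)" unfolding x_def using eta_df g by simp
    have npd: "real n powr (-\<delta>) = 1 / real n powr \<delta>" by (simp add: powr_minus_divide)
    have npd_pos: "0 < real n powr (-\<delta>)" using npos by simp
    have Kt1: "(Kp + 1/2) * 68 \<le> Kt" and Kt2: "2 * real NN \<le> Kt" unfolding Kt_def by auto
    show "\<bar>prob_le M Y (\<lambda>t. g t / real n) ^ n - prob_le ME eta g\<bar> \<le> Kt * real n powr (-\<delta>)"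
    proof (cases "s = 0")
      case True
      have gz: "g t = 0" if "t \<in> {0..1}" for t
        using supnorm_ge[OF gE01 that] True gneg[OF that] unfolding s_def by simp
      have "prob_le M Y (\<lambda>t. g t / real n) = 1" by (rule prob_le_zero[OF Y]) (simp add: gz)
      moreover have "prob_le ME eta g = 1" by (rule prob_le_zero[OF Ceta]) (simp add: gz)
      ultimately show ?thesis using Kt1 Kp npd_pos by simp
    next
      case False
      then have spos: "s > 0" using s0 by simp
      define f where "f = (\<lambda>t. g t / s)"
      have fE: "f \<in> Eneg" unfolding f_def using Eneg_div[OF g spos] .
      have fs: "supnorm f = 1" unfolding f_def using supnorm_div[OF gE01 spos] spos unfolding s_def by simp
      have f1: "f \<in> Eneg1" using fE fs unfolding Eneg1_def by simp
      show ?thesis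
      proof (cases "s / real n < 1 / real NN")
        case True
        define c where "c = s / real n"
        have c: "0 < c" "c < c1" "c \<le> c0" "c < c3" unfolding c_def using True NN1 spos npos by auto
        have cf: "(\<lambda>t. c * f t) = (\<lambda>t. g t / real n)" unfolding c_def f_def using spos by auto
        define y where "y = x / real n"
        have Dy: "Dnorm N Z (\<lambda>t. c * f t) = y"
          unfolding cf y_def x_def using D_div[OF eta eta_df g npos(2)] .
        have y0: "0 \<le> y" unfolding y_def using xs s0 npos by simp
        have Dy2: "Dnorm N Z (\<lambda>t. g t / real n) = y" using Dy cf by simp
        have ka: "\<bar>a - (1 - y)\<bar> \<le> y / 2" using key[OF c f1] unfolding cf Dy2 a_def .
        have kK: "\<bar>a - (1 - y)\<bar> \<le> Kp * c powr \<delta> * y" using keyK[OF c f1] unfolding cf Dy2 a_def .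
        define b where "b = exp (- y)"
        have bn: "b ^ n = exp (- x)"
        proof -
          have "b ^ n = exp (real n * (- y))" unfolding b_def by (rule exp_of_nat_mult[symmetric])
          also have "real n * (- y) = - x" unfolding y_def using npos by simp
          finally show ?thesis .
        qed
        define Mx where "Mx = exp (- y / 2)"
        have aM: "a \<le> Mx"
        proof -
          have "a \<le> 1 + (- y / 2)" using ka by linarith
          also have "\<dots> \<le> Mx" unfolding Mx_def by (rule exp_ge_add_one_self)
          finally show ?thesis .
        qed
        have bM: "b \<le> Mx" unfolding b_def Mx_def using y0 by simp
        have b0: "0 \<le> b" unfolding b_def by simp
        have Mpow: "Mx ^ (n - 1) \<le> exp (- x / 4)"
        proof -
          have "Mx ^ (n - 1) = exp (real (n - 1) * (- y / 2))" unfolding Mx_def by (rule exp_of_nat_mult[symmetric])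
          also have "real (n - 1) * (- y / 2) \<le> - x / 4"
          proof -
            have "real (n - 1) \<ge> real n / 2" using n by linarith
            then have "real (n - 1) * (y / 2) \<ge> real n / 2 * (y / 2)" using y0 by (intro mult_right_mono) auto
            moreover have "real n / 2 * (y / 2) = x / 4" unfolding y_def using npos by simp
            ultimately show ?thesis by linarith
          qed
          finally show ?thesis by simp
        qed
        have ab: "\<bar>a - b\<bar> \<le> Kp * c powr \<delta> * y + y^2 / 2"
        proof -
          have "\<bar>b - (1 - y)\<bar> \<le> y^2 / 2" unfolding b_def using exp_neg_taylor[OF y0] by auto
          then show ?thesis using kK by linarith
        qed
        have "\<bar>a ^ n - b ^ n\<bar> \<le> real n * Mx ^ (n - 1) * \<bar>a - b\<bar>"
          by (rule pow_diff_upper) (use a01 aM b0 bM in auto)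
        also have "\<dots> \<le> real n * exp (- x / 4) * (Kp * c powr \<delta> * y + y^2 / 2)"
          using Mpow ab npos by (intro mult_mono) (auto simp: Mx_def)
        also have "\<dots> = exp (- x / 4) * (Kp * c powr \<delta> * x + x^2 / (2 * real n))"
          unfolding y_def using npos by (simp add: field_simps power2_eq_square)
        also have "\<dots> \<le> exp (- x / 4) * ((Kp + 1/2) * (x + x^2) * real n powr (-\<delta>))"
        proof -
          have cp: "c powr \<delta> \<le> (1 + x) * real n powr (-\<delta>)"
          proof -
            have "c powr \<delta> = s powr \<delta> / real n powr \<delta>" unfolding c_def by (rule powr_divide)
            also have "\<dots> = s powr \<delta> * real n powr (-\<delta>)" using npd by simp
            also have "\<dots> \<le> (1 + x) * real n powr (-\<delta>)"
              using powr_le_1_plus[OF s0 d] xs npd_pos by (intro mult_right_mono) auto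
            finally show ?thesis .
          qed
          have nn: "1 / real n \<le> real n powr (-\<delta>)" using inv_le_powr npos d by simp
          have x0: "0 \<le> x" using xs s0 by simp
          have "Kp * c powr \<delta> * x \<le> Kp * ((1 + x) * real n powr (-\<delta>)) * x"
            using cp Kp x0 by (intro mult_right_mono mult_left_mono) auto
          moreover have "x^2 / (2 * real n) \<le> x^2 / 2 * real n powr (-\<delta>)"
          proof -
            have "x^2 / (2 * real n) = x^2 / 2 * (1 / real n)" by simp
            also have "\<dots> \<le> x^2 / 2 * real n powr (-\<delta>)" using nn by (intro mult_left_mono) auto
            finally show ?thesis .
          qed
          moreover have "Kp * ((1 + x) * real n powr (-\<delta>)) * x + x^2 / 2 * real n powr (-\<delta>)
              \<le> (Kp + 1/2) * (x + x^2) * real n powr (-\<delta>)"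
          proof -
            have "0 \<le> x * real n powr (-\<delta>)" using x0 npd_pos by simp
            then show ?thesis by (simp add: algebra_simps power2_eq_square)
          qed
          ultimately have "Kp * c powr \<delta> * x + x^2 / (2 * real n) \<le> (Kp + 1/2) * (x + x^2) * real n powr (-\<delta>)"
            by linarith
          then show ?thesis by (intro mult_left_mono) auto
        qed
        also have "\<dots> = (Kp + 1/2) * ((x + x^2) * exp (- x / 4)) * real n powr (-\<delta>)" by simp
        also have "\<dots> \<le> (Kp + 1/2) * 68 * real n powr (-\<delta>)"
        proof -
          have x0: "0 \<le> x" using xs s0 by simp
          have e: "exp (- x / 4) * exp (x / 4) = 1" by (simp add: exp_add[symmetric])
          have "(x + x^2) * exp (- x / 4) \<le> (4 * exp (x/4) + 64 * exp (x/4)) * exp (- x / 4)"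
            using exp_poly_bound[OF x0] by (intro mult_right_mono) auto
          also have "\<dots> = 68" using e by (simp add: algebra_simps)
          finally have "(x + x^2) * exp (- x / 4) \<le> 68" .
          then show ?thesis using Kp npd_pos by (intro mult_right_mono mult_left_mono) auto
        qed
        also have "\<dots> \<le> Kt * real n powr (-\<delta>)" using Kt1 npd_pos by (intro mult_right_mono) auto
        finally show ?thesis unfolding a_def[symmetric] peta bn[symmetric] .
      next
        case False
        then have sn: "1 / real NN \<le> s / real n" by simp
        define c where "c = 1 / real NN"
        have c: "0 < c" "c < c1" "c \<le> c0" "c < c3" unfolding c_def using NN1 NNpos by auto
        have cfE: "(\<lambda>t. c * f t) \<in> Eneg" using Eneg_scale[OF fE] c by simp
        have cfs: "supnorm (\<lambda>t. c * f t) = c"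
          using supnorm_scale[of f c] fE c fs unfolding Eneg_def by simp
        define y where "y = Dnorm N Z (\<lambda>t. c * f t)"
        have yc: "c \<le> y" unfolding y_def using D_ge[OF eta eta_df cfE] cfs by simp
        have yup: "y \<le> 1 / 3"
        proof -
          have "(\<lambda>t. c * f t) = (\<lambda>t. f t / real NN)" unfolding c_def by auto
          then have "y = Dnorm N Z f / real NN" unfolding y_def using D_div[OF eta eta_df fE NN2(2)] by simp
          also have "\<dots> \<le> real N0 / real NN" using N0(2)[OF fE] fs NNpos by (simp add: divide_right_mono)
          also have "\<dots> \<le> 1 / 3" using NN2 NNpos by (simp add: field_simps)
          finally show ?thesis .
        qed
        define A where "A = prob_le M Y (\<lambda>t. c * f t)"
        have kA: "\<bar>A - (1 - y)\<bar> \<le> y / 2" using key[OF c f1] unfolding A_def y_def .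
        have Apos: "A > 0" using kA yup by linarith
        have Aup: "A \<le> 1 - c / 2" using kA yc by linarith
        have Sm: "{\<omega> \<in> space M. \<forall>t\<in>{0..1}. Y \<omega> t \<le> c * f t} \<in> sets M"
          using Apos measure_notin_sets unfolding A_def prob_le_def by fastforce
        have aA: "a \<le> A"
          unfolding a_def A_def prob_le_def
        proof (rule finite_measure.finite_measure_mono[OF prob_space.axioms(1)[OF psY] _ Sm], safe)
          fix \<omega> and t :: real assume w: "\<omega> \<in> space M" "\<forall>t\<in>{0..1}. Y \<omega> t \<le> g t / real n" and t: "t \<in> {0..1}"
          have "g t / real n = (s / real n) * f t" unfolding f_def using spos by simp
          also have "\<dots> \<le> c * f t"
          proof -
            have "f t \<le> 0" using gneg[OF t] spos unfolding f_def by (simp add: divide_nonpos_pos)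
            then show ?thesis using sn unfolding c_def by (intro mult_right_mono_neg) auto
          qed
          finally have gc: "g t / real n \<le> c * f t" .
          show "Y \<omega> t \<le> c * f t" using order_trans[OF bspec[OF w(2) t] gc] .
        qed
        have an: "a ^ n \<le> exp (- (c / 2 * real n))"
        proof -
          have "a ^ n \<le> (1 - c / 2) ^ n" using aA Aup a01 by (intro power_mono) auto
          also have "\<dots> \<le> exp (- c / 2) ^ n"
          proof -
            have "c \<le> 1" unfolding c_def using NN2 by simp
            then show ?thesis using exp_ge_add_one_self[of "- c / 2"] by (intro power_mono) auto
          qed
          also have "\<dots> = exp (real n * (- c / 2))" by (rule exp_of_nat_mult[symmetric])
          also have "real n * (- c / 2) = - (c / 2 * real n)" by simp
          finally show ?thesis .
        qed
        have bn: "exp (- x) \<le> exp (- (c / 2 * real n))"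
        proof -
          have "c * real n \<le> s" using sn npos unfolding c_def by (simp add: field_simps)
          then show ?thesis using xs c npos s0 by simp
        qed
        have "\<bar>a ^ n - exp (- x)\<bar> \<le> exp (- (c / 2 * real n))"
        proof -
          have "0 \<le> a ^ n" using a01 by simp
          moreover have "0 < exp (- x)" by simp
          ultimately show ?thesis using an bn by (intro abs_leI) linarith+
        qed
        also have "\<dots> \<le> 1 / (c / 2 * real n)" using c npos by (intro exp_lin_bound) auto
        also have "\<dots> = 2 * real NN / real n" unfolding c_def by simp
        also have "\<dots> \<le> 2 * real NN * real n powr (-\<delta>)"
        proof -
          have "1 / real n \<le> real n powr (-\<delta>)" using inv_le_powr npos d by simp
          then show ?thesis using NNpos by (simp add: divide_inverse)
        qed
        also have "\<dots> \<le> Kt * real n powr (-\<delta>)" using Kt2 npd_pos by (intro mult_right_mono) auto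
        finally show ?thesis unfolding a_def[symmetric] peta .
      qed
    qed
  qed
qed


theorem mainTheorem10:
  fixes M :: "'a measure" and Y :: "'a \<Rightarrow> real \<Rightarrow> real"
    and MV :: "'c measure" and V :: "'c \<Rightarrow> real \<Rightarrow> real"
    and ME :: "'d measure" and eta :: "'d \<Rightarrow> real \<Rightarrow> real"
    and N :: "'b measure" and Z :: "'b \<Rightarrow> real \<Rightarrow> real"
  assumes Y: "Cneg_process M Y"
    and Z: "generator N Z"
    and V: "std_GPP MV V N Z"
    and eta: "std_max_stable ME eta"
    and eta_df: "\<forall>f\<in>Eneg. prob_le ME eta f = exp (- Dnorm N Z f)"
  shows "(\<forall>\<delta>. 0 < \<delta> \<and> \<delta> \<le> 1 \<longrightarrow> spectral_nbhd M Y MV V \<delta> \<longrightarrow> max_rate M Y ME eta \<delta>) \<and>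
         (von_mises M Y \<longrightarrow>
           (\<forall>\<delta>. 0 < \<delta> \<and> \<delta> \<le> 1 \<longrightarrow> max_rate M Y ME eta \<delta> \<longrightarrow> spectral_nbhd M Y MV V \<delta>))"
  using part1[OF Y V eta eta_df] part2[OF Y V eta eta_df] by blast

end
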